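(* Let $A$ be a complex semisimple Banach algebra with a unit. Then $\mathrm{Soc}(A)$ is finite-dimensional if and only if the norm closure of $\mathrm{Soc}(A)$ in $A$ has an identity element. *)

theory Defs
  imports "HOL-Analysis.Analysis"
begin

class cbanach_algebra_1 = real_normed_algebra_1 + banach +
  fixes scaleC :: "complex \<Rightarrow> 'a \<Rightarrow> 'a"
  assumes scaleC_add_right: "scaleC c (x + y) = scaleC c x + scaleC c y"
    and scaleC_add_left: "scaleC (c + d) x = scaleC c x + scaleC d x"
    and scaleC_scaleC: "scaleC c (scaleC d x) = scaleC (c * d) x"
    and scaleC_one: "scaleC 1 x = x"
    and scaleC_of_real: "scaleC (complex_of_real r) x = scaleR r x"
    and norm_scaleC: "norm (scaleC c x) = cmod c * norm x"
    and mult_scaleC_left: "scaleC c x * y = scaleC c (x * y)"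
    and mult_scaleC_right: "x * scaleC c y = scaleC c (x * y)"

definition cspan :: "'a::cbanach_algebra_1 set \<Rightarrow> 'a set" where
  "cspan S = {x. \<exists>T c. finite T \<and> T \<subseteq> S \<and> x = (\<Sum>t\<in>T. scaleC (c t) t)}"

definition csubspace :: "'a::cbanach_algebra_1 set \<Rightarrow> bool" where
  "csubspace L \<longleftrightarrow> 0 \<in> L \<and> (\<forall>x\<in>L. \<forall>y\<in>L. x + y \<in> L) \<and> (\<forall>c. \<forall>x\<in>L. scaleC c x \<in> L)"

definition left_ideal :: "'a::cbanach_algebra_1 set \<Rightarrow> bool" where
  "left_ideal L \<longleftrightarrow> csubspace L \<and> (\<forall>a. \<forall>x\<in>L. a * x \<in> L)"

definition maximal_left_ideal :: "'a::cbanach_algebra_1 set \<Rightarrow> bool" where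
  "maximal_left_ideal L \<longleftrightarrow> left_ideal L \<and> L \<noteq> UNIV \<and>
     (\<forall>J. left_ideal J \<and> L \<subseteq> J \<and> J \<noteq> UNIV \<longrightarrow> J = L)"

definition minimal_left_ideal :: "'a::cbanach_algebra_1 set \<Rightarrow> bool" where
  "minimal_left_ideal L \<longleftrightarrow> left_ideal L \<and> L \<noteq> {0} \<and>
     (\<forall>J. left_ideal J \<and> J \<subseteq> L \<and> J \<noteq> {0} \<longrightarrow> J = L)"

definition jacobson_radical :: "'a::cbanach_algebra_1 set" where
  "jacobson_radical = \<Inter> {L. maximal_left_ideal L}"

definition semisimple :: "'a::cbanach_algebra_1 itself \<Rightarrow> bool" where
  "semisimple _ \<longleftrightarrow> (jacobson_radical :: 'a set) = {0}"

text \<open>Socle: the sum of all minimal left ideals ({0} if there are none).\<close>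
definition socle :: "'a::cbanach_algebra_1 set" where
  "socle = cspan (\<Union> {L. minimal_left_ideal L})"

definition cfinite_dim :: "'a::cbanach_algebra_1 set \<Rightarrow> bool" where
  "cfinite_dim S \<longleftrightarrow> (\<exists>B. finite B \<and> S \<subseteq> cspan B)"

definition has_identity :: "'a::cbanach_algebra_1 set \<Rightarrow> bool" where
  "has_identity S \<longleftrightarrow> (\<exists>e\<in>S. \<forall>x\<in>S. e * x = x \<and> x * e = x)"

end

theory Submission
  imports Defs "HOL-Complex_Analysis.Complex_Analysis"
begin

lemma scaleC_zero_left[simp]: "scaleC 0 (x::'a::cbanach_algebra_1) = 0"
  using scaleC_of_real[of 0 x] by simp

lemma scaleC_zero_right[simp]: "scaleC c (0::'a::cbanach_algebra_1) = 0"
proof -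
  have "scaleC c (0::'a) = scaleC c 0 + scaleC c 0"
    using scaleC_add_right[of c 0 0] by simp
  then show ?thesis by simp
qed

lemma scaleC_minus_one: "scaleC (-1) (x::'a::cbanach_algebra_1) = - x"
  using scaleC_of_real[of "-1" x] by simp

lemma scaleC_minus_right: "scaleC c (- x::'a::cbanach_algebra_1) = - scaleC c x"
proof -
  have "scaleC c x + scaleC c (-x) = 0"
    using scaleC_add_right[of c x "-x"] by simp
  then show ?thesis by (simp add: eq_neg_iff_add_eq_0 add.commute)
qed

lemma scaleC_diff_right: "scaleC c (x - y::'a::cbanach_algebra_1) = scaleC c x - scaleC c y"
  using scaleC_add_right[of c x "-y"] by (simp add: scaleC_minus_right)

lemma scaleC_diff_left: "scaleC (c - d) (x::'a::cbanach_algebra_1) = scaleC c x - scaleC d x"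
proof -
  have "scaleC (c - d) x + scaleC d x = scaleC c x"
    using scaleC_add_left[of "c - d" d x] by simp
  then show ?thesis by (simp add: eq_diff_eq)
qed

lemma scaleC_one_scaleC: "scaleC 1 x = (x::'a::cbanach_algebra_1)"
  by (rule scaleC_one)

lemma scaleC_decomp:
  "scaleC c (x::'a::cbanach_algebra_1) = Re c *\<^sub>R x + Im c *\<^sub>R scaleC \<i> x"
proof -
  have c: "c = complex_of_real (Re c) + complex_of_real (Im c) * \<i>"
    by (simp add: complex_eq_iff)
  have "scaleC c x = scaleC (complex_of_real (Re c)) x + scaleC (complex_of_real (Im c) * \<i>) x"
    by (subst c) (rule scaleC_add_left)
  also have "\<dots> = Re c *\<^sub>R x + Im c *\<^sub>R scaleC \<i> x"
    by (simp add: scaleC_of_real scaleC_scaleC[symmetric])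
  finally show ?thesis .
qed

lemma scaleC_sum_right:
  "scaleC c (\<Sum>t\<in>T. f t) = (\<Sum>t\<in>T. scaleC c (f t::'a::cbanach_algebra_1))"
  by (induct T rule: infinite_finite_induct) (auto simp: scaleC_add_right)

lemma scaleC_mult_both: "scaleC c (x::'a::cbanach_algebra_1) * y = x * scaleC c y"
  by (simp add: mult_scaleC_left mult_scaleC_right)

lemma csubspace_0: "csubspace L \<Longrightarrow> 0 \<in> L"
  by (simp add: csubspace_def)
lemma csubspace_add: "csubspace L \<Longrightarrow> x \<in> L \<Longrightarrow> y \<in> L \<Longrightarrow> x + y \<in> L"
  by (simp add: csubspace_def)
lemma csubspace_scaleC: "csubspace L \<Longrightarrow> x \<in> L \<Longrightarrow> scaleC c x \<in> L"
  by (simp add: csubspace_def)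
lemma csubspace_scaleR: "csubspace L \<Longrightarrow> x \<in> L \<Longrightarrow> r *\<^sub>R x \<in> L"
  by (metis csubspace_scaleC scaleC_of_real)
lemma csubspace_uminus: "csubspace L \<Longrightarrow> x \<in> L \<Longrightarrow> - x \<in> L"
  by (metis csubspace_scaleC scaleC_minus_one)
lemma csubspace_diff: "csubspace L \<Longrightarrow> x \<in> L \<Longrightarrow> y \<in> L \<Longrightarrow> x - y \<in> L"
  by (metis csubspace_add csubspace_uminus diff_conv_add_uminus)
lemma csubspace_sum: "csubspace L \<Longrightarrow> (\<And>t. t \<in> T \<Longrightarrow> f t \<in> L) \<Longrightarrow> sum f T \<in> L"
  by (induct T rule: infinite_finite_induct) (auto simp: csubspace_0 csubspace_add)

lemma cspan_superset: "x \<in> X \<Longrightarrow> x \<in> cspan X"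
  unfolding cspan_def
  by (rule CollectI, rule exI[of _ "{x}"], rule exI[of _ "\<lambda>_. 1"]) (simp add: scaleC_one)

lemma cspan_minimal: "csubspace L \<Longrightarrow> X \<subseteq> L \<Longrightarrow> cspan X \<subseteq> L"
  unfolding cspan_def
  by (auto intro!: csubspace_sum csubspace_scaleC)

lemma sum_restrict_scaleC:
  assumes "finite T" "T1 \<subseteq> T"
  shows "(\<Sum>t\<in>T. scaleC (if t \<in> T1 then c t else 0) t) = (\<Sum>t\<in>T1. scaleC (c t) (t::'a::cbanach_algebra_1))"
  by (rule sum.mono_neutral_cong_right) (use assms in auto)

lemma csubspace_cspan: "csubspace (cspan X)"
  unfolding csubspace_def
proof (intro conjI ballI allI)
  show "0 \<in> cspan X" unfolding cspan_def by (rule CollectI, rule exI[of _ "{}"]) simp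
next
  fix x y assume "x \<in> cspan X" "y \<in> cspan X"
  then obtain T1 c1 T2 c2 where 1: "finite T1" "T1 \<subseteq> X" "x = (\<Sum>t\<in>T1. scaleC (c1 t) t)"
    and 2: "finite T2" "T2 \<subseteq> X" "y = (\<Sum>t\<in>T2. scaleC (c2 t) t)"
    unfolding cspan_def by blast
  let ?T = "T1 \<union> T2"
  let ?c = "\<lambda>t. (if t \<in> T1 then c1 t else 0) + (if t \<in> T2 then c2 t else 0)"
  have "(\<Sum>t\<in>?T. scaleC (?c t) t) = (\<Sum>t\<in>?T. scaleC (if t \<in> T1 then c1 t else 0) t)
       + (\<Sum>t\<in>?T. scaleC (if t \<in> T2 then c2 t else 0) t)"
    by (simp add: scaleC_add_left sum.distrib)
  also have "\<dots> = x + y"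
    using 1 2 by (simp add: sum_restrict_scaleC)
  finally have eq: "(\<Sum>t\<in>?T. scaleC (?c t) t) = x + y" .
  show "x + y \<in> cspan X"
    unfolding cspan_def
    by (rule CollectI, rule exI[of _ "?T"], rule exI[of _ "?c"]) (use eq 1 2 in auto)
next
  fix d x assume "x \<in> cspan X"
  then obtain T c where 1: "finite T" "T \<subseteq> X" "x = (\<Sum>t\<in>T. scaleC (c t) t)"
    unfolding cspan_def by blast
  have eq: "scaleC d x = (\<Sum>t\<in>T. scaleC (d * c t) t)"
    using 1 by (simp add: scaleC_sum_right scaleC_scaleC)
  show "scaleC d x \<in> cspan X"
    unfolding cspan_def
    by (rule CollectI, rule exI[of _ "T"], rule exI[of _ "\<lambda>t. d * c t"]) (use eq 1 in auto)
qed

lemma left_idealD: "left_ideal L \<Longrightarrow> x \<in> L \<Longrightarrow> a * x \<in> L"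
  by (simp add: left_ideal_def)
lemma left_ideal_csub: "left_ideal L \<Longrightarrow> csubspace L"
  by (simp add: left_ideal_def)

lemma left_ideal_image_mult:
  assumes "left_ideal (L::'a::cbanach_algebra_1 set)"
  shows "left_ideal ((\<lambda>x. x * a) ` L)"
proof -
  have cs: "csubspace L" using assms by (simp add: left_ideal_def)
  show ?thesis
    unfolding left_ideal_def csubspace_def
  proof (intro conjI ballI allI)
    show "0 \<in> (\<lambda>x. x * a) ` L" using csubspace_0[OF cs] by force
  next
    fix x y assume "x \<in> (\<lambda>x. x * a) ` L" "y \<in> (\<lambda>x. x * a) ` L"
    then obtain u v where "u \<in> L" "v \<in> L" "x = u * a" "y = v * a" by blast
    then show "x + y \<in> (\<lambda>x. x * a) ` L"
      using csubspace_add[OF cs] by (auto simp: distrib_right intro!: image_eqI[of _ _ "u + v"])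
  next
    fix c x assume "x \<in> (\<lambda>x. x * a) ` L"
    then obtain u where "u \<in> L" "x = u * a" by blast
    then show "scaleC c x \<in> (\<lambda>x. x * a) ` L"
      using csubspace_scaleC[OF cs] by (auto simp: mult_scaleC_left intro!: image_eqI[of _ _ "scaleC c u"])
  next
    fix b x assume "x \<in> (\<lambda>x. x * a) ` L"
    then obtain u where "u \<in> L" "x = u * a" by blast
    then show "b * x \<in> (\<lambda>x. x * a) ` L"
      using left_idealD[OF assms] by (auto simp: mult.assoc[symmetric] intro!: image_eqI[of _ _ "b * u"])
  qed
qed

lemma left_ideal_UNIV: "left_ideal (UNIV::'a::cbanach_algebra_1 set)"
  by (simp add: left_ideal_def csubspace_def)

lemma left_ideal_principal: "left_ideal (range (\<lambda>x. x * (a::'a::cbanach_algebra_1)))"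
  using left_ideal_image_mult[OF left_ideal_UNIV, of a] by simp

lemma left_ideal_preimage:
  assumes "left_ideal (L::'a::cbanach_algebra_1 set)" "left_ideal J"
  shows "left_ideal {x\<in>L. x * a \<in> J}"
  using assms unfolding left_ideal_def csubspace_def
  by (auto simp: distrib_right mult_scaleC_left mult.assoc)

lemma minimal_image_mult:
  assumes m: "minimal_left_ideal (L::'a::cbanach_algebra_1 set)" and nz: "(\<lambda>x. x * a) ` L \<noteq> {0}"
  shows "minimal_left_ideal ((\<lambda>x. x * a) ` L)"
proof -
  have L: "left_ideal L" using m by (simp add: minimal_left_ideal_def)
  have "J = (\<lambda>x. x * a) ` L" if J: "left_ideal J" "J \<subseteq> (\<lambda>x. x * a) ` L" "J \<noteq> {0}" for J
  proof -
    let ?K = "{x\<in>L. x * a \<in> J}"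
    have K: "left_ideal ?K" by (rule left_ideal_preimage[OF L J(1)])
    obtain j where j: "j \<in> J" "j \<noteq> 0" using J(3) csubspace_0[OF left_ideal_csub[OF J(1)]] by blast
    then obtain u where u: "u \<in> L" "j = u * a" using J(2) by blast
    have "u \<in> ?K" "u \<noteq> 0" using u j by auto
    then have "?K \<noteq> {0}" by blast
    then have "?K = L" using m K unfolding minimal_left_ideal_def by blast
    then have "(\<lambda>x. x * a) ` L \<subseteq> J" by blast
    then show ?thesis using J(2) by blast
  qed
  then show ?thesis
    using nz left_ideal_image_mult[OF L] unfolding minimal_left_ideal_def by blast
qed

section \<open>Semisimplicity\<close>

lemma semisimple_nil:
  assumes ss: "semisimple TYPE('a::cbanach_algebra_1)"
    and L: "left_ideal (L::'a set)" and nil: "\<And>x y. x \<in> L \<Longrightarrow> y \<in> L \<Longrightarrow> x * y = 0"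
    and x: "x \<in> L"
  shows "x = 0"
proof -
  have "x \<in> (jacobson_radical :: 'a set)"
    unfolding jacobson_radical_def
  proof (rule InterI, safe)
    fix M :: "'a set" assume mM: "maximal_left_ideal M"
    show "x \<in> M"
    proof (rule ccontr)
      assume xM: "x \<notin> M"
      have M: "left_ideal M" "M \<noteq> UNIV" using mM unfolding maximal_left_ideal_def by auto
      have Mc: "csubspace M" using M(1) by (simp add: left_ideal_def)
      let ?J = "{m + a * x | m a. m \<in> M}"
      have J: "left_ideal ?J"
        unfolding left_ideal_def csubspace_def
      proof (intro conjI ballI allI)
        have "(0::'a) = 0 + 0 * x" by simp
        then show "0 \<in> ?J" using csubspace_0[OF Mc] by blast
      next
        fix u v assume "u \<in> ?J" "v \<in> ?J"
        then obtain m1 a1 m2 a2 where "u = m1 + a1 * x" "v = m2 + a2 * x" "m1 \<in> M" "m2 \<in> M" by blast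
        then have "u + v = (m1 + m2) + (a1 + a2) * x" "m1 + m2 \<in> M"
          using csubspace_add[OF Mc] by (auto simp: algebra_simps)
        then show "u + v \<in> ?J" by blast
      next
        fix c u assume "u \<in> ?J"
        then obtain m1 a1 where "u = m1 + a1 * x" "m1 \<in> M" by blast
        then have "scaleC c u = scaleC c m1 + (scaleC c a1) * x" "scaleC c m1 \<in> M"
          using csubspace_scaleC[OF Mc] by (auto simp: scaleC_add_right mult_scaleC_left)
        then show "scaleC c u \<in> ?J" by blast
      next
        fix b u assume "u \<in> ?J"
        then obtain m1 a1 where "u = m1 + a1 * x" "m1 \<in> M" by blast
        then have "b * u = (b * m1) + (b * a1) * x" "b * m1 \<in> M"
          using left_idealD[OF M(1)] by (auto simp: distrib_left mult.assoc)
        then show "b * u \<in> ?J" by blast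
      qed
      have MJ: "M \<subseteq> ?J" by (force intro: exI[of _ 0])
      have xJ: "x \<in> ?J" using csubspace_0[OF Mc] by (force intro: exI[of _ 1])
      have "?J = UNIV"
      proof (rule ccontr)
        assume "?J \<noteq> UNIV"
        then have "?J = M" using mM J MJ unfolding maximal_left_ideal_def by blast
        then show False using xJ xM by blast
      qed
      then have "(1::'a) \<in> ?J" by (simp only: UNIV_I)
      then obtain m a where ma: "1 = m + a * x" "m \<in> M" by blast
      have ax: "a * x \<in> L" using left_idealD[OF L x] .
      have m1: "m = 1 - a * x" using ma(1) by (simp add: eq_diff_eq)
      have "(1 + a * x) * m = 1 - (a * x) * (a * x)"
        unfolding m1 by (simp add: distrib_right right_diff_distrib)
      also have "\<dots> = 1" using nil[OF ax ax] by simp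
      finally have "1 \<in> M" using left_idealD[OF M(1) ma(2), of "1 + a * x"] by simp
      then have "y \<in> M" for y using left_idealD[OF M(1), of 1 y] by simp
      then show False using M(2) by blast
    qed
  qed
  moreover have "(jacobson_radical::'a set) = {0}" using ss unfolding semisimple_def .
  ultimately show ?thesis by blast
qed

lemma minimal_idempotent:
  assumes ss: "semisimple TYPE('a::cbanach_algebra_1)"
    and m: "minimal_left_ideal (L::'a set)"
  obtains p where "p \<in> L" "p * p = p" "p \<noteq> 0" "L = range (\<lambda>x. x * p)"
proof -
  have L: "left_ideal L" "L \<noteq> {0}" using m by (auto simp: minimal_left_ideal_def)
  have Lc: "csubspace L" using L(1) by (simp add: left_ideal_def)
  have "\<exists>x\<in>L. \<exists>y\<in>L. x * y \<noteq> 0"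
  proof (rule ccontr)
    assume "\<not> ?thesis"
    then have "\<forall>x\<in>L. x = 0" using semisimple_nil[OF ss L(1)] by blast
    then show False using L(2) csubspace_0[OF Lc] by blast
  qed
  then obtain x y where xy: "x \<in> L" "y \<in> L" "x * y \<noteq> 0" by blast
  let ?Ly = "(\<lambda>x. x * y) ` L"
  have Ly: "left_ideal ?Ly" by (rule left_ideal_image_mult[OF L(1)])
  have Lysub: "?Ly \<subseteq> L" using left_idealD[OF L(1) xy(2)] by blast
  have "?Ly \<noteq> {0}" using xy by blast
  then have "?Ly = L" using m Ly Lysub unfolding minimal_left_ideal_def by blast
  then obtain p where p: "p \<in> L" "p * y = y" using xy(2) by (metis (no_types, lifting) imageE)
  let ?N = "{x\<in>L. x * y \<in> {0}}"
  have N: "left_ideal ?N"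
    by (rule left_ideal_preimage[OF L(1)]) (simp add: left_ideal_def csubspace_def)
  have "?N \<noteq> L" using xy by auto
  then have N0: "?N = {0}" using m N unfolding minimal_left_ideal_def by blast
  have "p * p - p \<in> L" using csubspace_diff[OF Lc left_idealD[OF L(1) p(1)] p(1)] .
  moreover have "(p * p - p) * y = 0" using p by (simp add: algebra_simps mult.assoc)
  ultimately have "p * p - p \<in> ?N" by simp
  then have "p * p - p = 0" using N0 by blast
  then have pp: "p * p = p" by simp
  have py: "p \<noteq> 0" using p xy(3) by auto
  have R: "left_ideal (range (\<lambda>x. x * p))" by (rule left_ideal_principal)
  have Rsub: "range (\<lambda>x. x * p) \<subseteq> L" using left_idealD[OF L(1) p(1)] by blast
  have "range (\<lambda>x. x * p) \<noteq> {0}" using py by (metis mult_1_left rangeI singletonD)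
  then have "range (\<lambda>x. x * p) = L" using m R Rsub unfolding minimal_left_ideal_def by blast
  then show ?thesis using that p(1) pp py by blast
qed

section \<open>The socle is an ideal\<close>

lemma socle_csub: "csubspace (socle::'a::cbanach_algebra_1 set)"
  unfolding socle_def by (rule csubspace_cspan)

lemma minimal_in_socle: "minimal_left_ideal L \<Longrightarrow> x \<in> L \<Longrightarrow> x \<in> (socle::'a::cbanach_algebra_1 set)"
  unfolding socle_def by (rule cspan_superset) blast

lemma socle_induct:
  assumes "csubspace P" "\<And>L x. minimal_left_ideal L \<Longrightarrow> x \<in> L \<Longrightarrow> x \<in> P"
  shows "(socle::'a::cbanach_algebra_1 set) \<subseteq> P"
  unfolding socle_def by (rule cspan_minimal) (use assms in auto)

lemma socle_left: "x \<in> socle \<Longrightarrow> a * x \<in> (socle::'a::cbanach_algebra_1 set)"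
proof -
  have "socle \<subseteq> {x::'a. \<forall>a. a * x \<in> socle}"
  proof (rule socle_induct)
    show "csubspace {x::'a. \<forall>a. a * x \<in> socle}"
      unfolding csubspace_def using socle_csub
      by (auto simp: distrib_left mult_scaleC_right intro: csubspace_add csubspace_scaleC csubspace_0)
  next
    fix L x assume "minimal_left_ideal (L::'a set)" "x \<in> L"
    then show "x \<in> {x. \<forall>a. a * x \<in> socle}"
      by (auto simp: minimal_left_ideal_def intro: minimal_in_socle left_idealD)
  qed
  then show "x \<in> socle \<Longrightarrow> a * x \<in> socle" by blast
qed

lemma socle_right: "x \<in> socle \<Longrightarrow> x * a \<in> (socle::'a::cbanach_algebra_1 set)"
proof -
  have "socle \<subseteq> {x::'a. \<forall>a. x * a \<in> socle}"
  proof (rule socle_induct)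
    show "csubspace {x::'a. \<forall>a. x * a \<in> socle}"
      unfolding csubspace_def using socle_csub
      by (auto simp: distrib_right mult_scaleC_left intro: csubspace_add csubspace_scaleC csubspace_0)
  next
    fix L x assume m: "minimal_left_ideal (L::'a set)" and x: "x \<in> L"
    show "x \<in> {x. \<forall>a. x * a \<in> socle}"
    proof (safe)
      fix a
      show "x * a \<in> socle"
      proof (cases "(\<lambda>x. x * a) ` L = {0}")
        case True
        then show ?thesis using x csubspace_0[OF socle_csub] by (metis image_eqI singletonD)
      next
        case False
        then show ?thesis using minimal_image_mult[OF m False] x by (blast intro: minimal_in_socle)
      qed
    qed
  qed
  then show "x \<in> socle \<Longrightarrow> x * a \<in> socle" by blast
qed


lemma cspan_real_span:
  "cspan (B::'a::cbanach_algebra_1 set) \<subseteq> span (B \<union> scaleC \<i> ` B)"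
proof
  fix x assume "x \<in> cspan B"
  then obtain T c where T: "finite T" "T \<subseteq> B" "x = (\<Sum>t\<in>T. scaleC (c t) t)"
    unfolding cspan_def by blast
  have "x = (\<Sum>t\<in>T. Re (c t) *\<^sub>R t + Im (c t) *\<^sub>R scaleC \<i> t)"
    unfolding T(3) by (rule sum.cong[OF refl scaleC_decomp])
  also have "\<dots> \<in> span (B \<union> scaleC \<i> ` B)"
  proof (rule span_sum)
    fix t assume "t \<in> T"
    then have tB: "t \<in> B" using T(2) by blast
    have 1: "t \<in> span (B \<union> scaleC \<i> ` B)" by (rule span_base) (use tB in blast)
    have 2: "scaleC \<i> t \<in> span (B \<union> scaleC \<i> ` B)" by (rule span_base) (use tB in blast)
    show "Re (c t) *\<^sub>R t + Im (c t) *\<^sub>R scaleC \<i> t \<in> span (B \<union> scaleC \<i> ` B)"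
      by (rule span_add[OF span_scale[OF 1] span_scale[OF 2]])
  qed
  finally show "x \<in> span (B \<union> scaleC \<i> ` B)" .
qed

lemma dim_strict:
  fixes U W :: "'a::real_vector set"
  assumes U: "subspace U" and UW: "U \<subseteq> W" and y: "y \<in> W" "y \<notin> U"
    and WB: "W \<subseteq> span B0" and fB: "finite B0"
  shows "dim U < dim W"
proof -
  obtain A where A: "A \<subseteq> U" "independent A" "U \<subseteq> span A" "card A = dim U"
    by (rule basis_exists)
  obtain BW where BW: "BW \<subseteq> W" "independent BW" "W \<subseteq> span BW" "card BW = dim W"
    by (rule basis_exists)
  have fBW: "finite BW"
    using independent_span_bound[OF fB BW(2)] BW(1) WB by auto
  have "span A \<subseteq> U" by (rule span_minimal[OF A(1) U])
  then have yA: "y \<notin> span A" using y by blast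
  have ind: "independent (insert y A)" by (rule independent_insertI[OF yA A(2)])
  have sub: "insert y A \<subseteq> span BW" using BW(3) y A(1) UW by blast
  have "finite (insert y A) \<and> card (insert y A) \<le> card BW"
    by (rule independent_span_bound[OF fBW ind sub])
  moreover have "y \<notin> A" using y A(1) by blast
  ultimately show ?thesis using A(4) BW(4) by auto
qed

lemma socle_right_unit:
  assumes ss: "semisimple TYPE('a::cbanach_algebra_1)" and fd: "cfinite_dim (socle::'a set)"
  obtains e where "e \<in> (socle::'a set)" "\<And>s. s \<in> (socle::'a set) \<Longrightarrow> s * e = s"
proof -
  let ?S = "socle::'a set"
  obtain B where B: "finite B" "?S \<subseteq> cspan B" using fd cfinite_dim_def by blast
  define B0 where "B0 = B \<union> scaleC \<i> ` B"
  have B0: "finite B0" "?S \<subseteq> span B0"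
    using B cspan_real_span[of B] unfolding B0_def by auto
  define V where "V e = (\<lambda>s. s * e) ` ?S" for e
  have Vsub: "V e \<subseteq> ?S" for e unfolding V_def using socle_right by blast
  have Vsubsp: "subspace (V e)" for e
    unfolding subspace_def V_def
  proof (intro conjI ballI allI)
    show "0 \<in> (\<lambda>s. s * e) ` ?S" using csubspace_0[OF socle_csub] by force
  next
    fix x y assume "x \<in> (\<lambda>s. s * e) ` ?S" "y \<in> (\<lambda>s. s * e) ` ?S"
    then obtain u v where uv: "u \<in> ?S" "v \<in> ?S" "x = u * e" "y = v * e" by blast
    have "x + y = (u + v) * e" by (simp add: uv(3,4) distrib_right)
    moreover have "u + v \<in> ?S" by (rule csubspace_add[OF socle_csub uv(1,2)])
    ultimately show "x + y \<in> (\<lambda>s. s * e) ` ?S" by blast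
  next
    fix c :: real and x assume "x \<in> (\<lambda>s. s * e) ` ?S"
    then obtain u where u: "u \<in> ?S" "x = u * e" by blast
    have "c *\<^sub>R x = (c *\<^sub>R u) * e" by (simp add: u(2))
    moreover have "c *\<^sub>R u \<in> ?S" by (rule csubspace_scaleR[OF socle_csub u(1)])
    ultimately show "c *\<^sub>R x \<in> (\<lambda>s. s * e) ` ?S" by blast
  qed
  define P where "P e \<longleftrightarrow> e \<in> ?S \<and> e * e = e" for e
  have P0: "P 0" unfolding P_def using csubspace_0[OF socle_csub] by simp
  have bound: "\<forall>e. P e \<longrightarrow> dim (V e) < card B0 + 1"
    using dim_le_card[OF subset_trans[OF Vsub B0(2)] B0(1)] by (simp add: less_Suc_eq_le)
  obtain e where e: "P e" "\<And>f. P f \<Longrightarrow> dim (V f) \<le> dim (V e)"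
    using ex_has_greatest_nat[of P 0 "\<lambda>e. dim (V e)" "card B0 + 1", OF P0 bound] by blast
  have eS: "e \<in> ?S" and ee: "e * e = e" using e(1) by (auto simp: P_def)
  show ?thesis
  proof (rule that[OF eS])
    fix s assume s: "s \<in> ?S"
    show "s * e = s"
    proof (rule ccontr)
      assume ne: "s * e \<noteq> s"
      obtain L t where Lt: "minimal_left_ideal L" "t \<in> L" "t * e \<noteq> t"
      proof -
        have "\<exists>L t. minimal_left_ideal L \<and> t \<in> L \<and> t * e \<noteq> t"
        proof (rule ccontr)
          assume "\<not> ?thesis"
          then have H: "\<And>L t. minimal_left_ideal L \<Longrightarrow> t \<in> L \<Longrightarrow> t \<in> {x. x * e = x}" by blast
          have cs: "csubspace {x. x * e = x}" unfolding csubspace_def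
            by (simp add: distrib_right mult_scaleC_left)
          have "?S \<subseteq> {x. x * e = x}" by (rule socle_induct[OF cs H])
          then show False using s ne by blast
        qed
        then show ?thesis using that by blast
      qed
      let ?a = "1 - e"
      have L: "left_ideal L" using Lt(1) by (simp add: minimal_left_ideal_def)
      have "t * ?a \<noteq> 0" using Lt(3) by (simp add: algebra_simps)
      then have "(\<lambda>x. x * ?a) ` L \<noteq> {0}" using Lt(2) by blast
      then have mLa: "minimal_left_ideal ((\<lambda>x. x * ?a) ` L)"
        by (rule minimal_image_mult[OF Lt(1)])
      obtain q where q: "q \<in> (\<lambda>x. x * ?a) ` L" "q * q = q" "q \<noteq> 0"
        by (rule minimal_idempotent[OF ss mLa]) blast
      then obtain x where x: "x \<in> L" "q = x * ?a" by blast
      have q1: "q = x - x * e" using x(2) by (simp add: right_diff_distrib)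
      have "q * e = x * e - x * (e * e)" unfolding q1 by (simp add: left_diff_distrib mult.assoc)
      then have qe: "q * e = 0" using ee by simp
      have qS: "q \<in> ?S" using minimal_in_socle[OF mLa q(1)] .
      define f where "f = e + q - e * q"
      have fS: "f \<in> ?S" unfolding f_def
        using csubspace_diff[OF socle_csub csubspace_add[OF socle_csub eS qS] socle_left[OF qS]] .
      have fe: "f * e = e" unfolding f_def
        by (simp add: distrib_right left_diff_distrib mult.assoc ee qe)
      have fq: "f * q = q" unfolding f_def
        by (simp add: distrib_right left_diff_distrib mult.assoc q(2))
      have ff: "f * f = f"
      proof -
        have "f * f = f * e + f * q - (f * e) * q"
          by (simp add: f_def distrib_left right_diff_distrib mult.assoc)
        then show ?thesis using fe fq by (simp add: f_def)
      qed
      have ef: "e * f = e" unfolding f_def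
        by (simp add: distrib_left right_diff_distrib mult.assoc[symmetric] ee)
      have qf: "q * f = q" unfolding f_def
        by (simp add: distrib_left right_diff_distrib mult.assoc[symmetric] qe q(2))
      have Pf: "P f" using fS ff by (simp add: P_def)
      have VV: "V e \<subseteq> V f"
      proof
        fix y assume "y \<in> V e"
        then obtain s' where s': "s' \<in> ?S" "y = s' * e" unfolding V_def by blast
        have "y = (s' * e) * f" using s'(2) ef by (simp add: mult.assoc)
        then show "y \<in> V f" unfolding V_def using socle_right[OF s'(1)] by blast
      qed
      have qVf: "q \<in> V f" unfolding V_def using qf qS by (metis image_eqI)
      have qVe: "q \<notin> V e"
      proof
        assume "q \<in> V e"
        then obtain s' where s': "q = s' * e" unfolding V_def by blast
        then have "q * e = q" using ee by (simp add: mult.assoc)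
        then show False using qe q(3) by simp
      qed
      have "dim (V e) < dim (V f)"
        by (rule dim_strict[OF Vsubsp VV qVf qVe subset_trans[OF Vsub B0(2)] B0(1)])
      then show False using e(2)[OF Pf] by simp
    qed
  qed
qed

lemma socle_unit:
  assumes ss: "semisimple TYPE('a::cbanach_algebra_1)" and fd: "cfinite_dim (socle::'a set)"
  obtains e where "e \<in> (socle::'a set)" "\<And>s. s \<in> (socle::'a set) \<Longrightarrow> s * e = s \<and> e * s = s"
proof -
  let ?S = "socle::'a set"
  obtain e where e: "e \<in> ?S" "\<And>s. s \<in> ?S \<Longrightarrow> s * e = s" by (rule socle_right_unit[OF ss fd]) blast
  have ee: "e * e = e" by (rule e(2)[OF e(1)])
  have "e * s = s" if s: "s \<in> ?S" for s
  proof -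
    define t where "t = s - e * s"
    have tS: "t \<in> ?S" unfolding t_def using csubspace_diff[OF socle_csub s socle_left[OF s]] .
    have et: "e * t = 0" unfolding t_def by (simp add: right_diff_distrib mult.assoc[symmetric] ee)
    have nil: "x * y = 0" if xr: "x \<in> range (\<lambda>a. a * t)" and yr: "y \<in> range (\<lambda>a. a * t)" for x y
    proof -
      obtain a b where ab: "x = a * t" "y = b * t" using xr yr by blast
      have tbe: "t * b * e = t * b" by (rule e(2)[OF socle_right[OF tS]])
      have "t * b * t = (t * b * e) * t" by (simp only: tbe)
      also have "\<dots> = (t * b) * (e * t)" by (simp only: mult.assoc)
      finally have "t * b * t = 0" using et by simp
      then show ?thesis using ab by (simp add: mult.assoc)
    qed
    have tr: "t \<in> range (\<lambda>x. x * t)" by (metis mult_1_left rangeI)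
    have "t = 0" by (rule semisimple_nil[OF ss left_ideal_principal nil tr])
    then show ?thesis unfolding t_def by simp
  qed
  then show ?thesis using that e by blast
qed

lemma forward:
  assumes ss: "semisimple TYPE('a::cbanach_algebra_1)" and fd: "cfinite_dim (socle::'a set)"
  shows "has_identity (closure (socle::'a set))"
proof -
  let ?S = "socle::'a set"
  obtain e where e: "e \<in> ?S" "\<And>s. s \<in> ?S \<Longrightarrow> s * e = s \<and> e * s = s" by (rule socle_unit[OF ss fd]) blast
  have "closed {x::'a. e * x = x \<and> x * e = x}"
    by (intro closed_Collect_conj closed_Collect_eq continuous_intros)
  moreover have "?S \<subseteq> {x::'a. e * x = x \<and> x * e = x}" using e(2) by blast
  ultimately have "closure ?S \<subseteq> {x::'a. e * x = x \<and> x * e = x}" by (rule closure_minimal[rotated])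
  then show ?thesis unfolding has_identity_def using e(1) closure_subset by blast
qed


section \<open>Hahn-Banach (real, norm-dominated)\<close>

definition hb_ok :: "('a::real_normed_vector \<times> real) set \<Rightarrow> bool" where
  "hb_ok G \<longleftrightarrow> (\<forall>x t y s. (x,t) \<in> G \<longrightarrow> (y,s) \<in> G \<longrightarrow> (x + y, t + s) \<in> G) \<and>
     (\<forall>x t c. (x,t) \<in> G \<longrightarrow> (c *\<^sub>R x, c * t) \<in> G) \<and>
     (\<forall>x t s. (x,t) \<in> G \<longrightarrow> (x,s) \<in> G \<longrightarrow> t = s) \<and>
     (\<forall>x t. (x,t) \<in> G \<longrightarrow> t \<le> norm x)"

lemma hb_add: "hb_ok G \<Longrightarrow> (x,t) \<in> G \<Longrightarrow> (y,s) \<in> G \<Longrightarrow> (x + y, t + s) \<in> G"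
  unfolding hb_ok_def by blast
lemma hb_scale: "hb_ok G \<Longrightarrow> (x,t) \<in> G \<Longrightarrow> (c *\<^sub>R x, c * t) \<in> G"
  unfolding hb_ok_def by blast
lemma hb_fun: "hb_ok G \<Longrightarrow> (x,t) \<in> G \<Longrightarrow> (x,s) \<in> G \<Longrightarrow> t = s"
  unfolding hb_ok_def by blast
lemma hb_bound: "hb_ok G \<Longrightarrow> (x,t) \<in> G \<Longrightarrow> t \<le> norm x"
  unfolding hb_ok_def by blast

lemma norm_pos_scale:
  fixes x y :: "'a::real_normed_vector"
  assumes "c > 0"
  shows "norm (x + c *\<^sub>R y) = c * norm ((1/c) *\<^sub>R x + y)"
proof -
  have "x + c *\<^sub>R y = c *\<^sub>R ((1/c) *\<^sub>R x + y)"
    using assms by (simp add: scaleR_add_right)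
  then show ?thesis using assms by simp
qed

lemma hb_extend:
  fixes G :: "('a::real_normed_vector \<times> real) set"
  assumes ok: "hb_ok G" and ne: "(x0, t0) \<in> G" and y: "y \<notin> fst ` G"
  shows "\<exists>G'. hb_ok G' \<and> G \<subseteq> G' \<and> y \<in> fst ` G'"
proof -
  have key: "t - norm (x - y) \<le> norm (x' + y) - t'" if "(x,t) \<in> G" "(x',t') \<in> G" for x t x' t'
  proof -
    have "t + t' \<le> norm (x + x')" using hb_bound[OF ok hb_add[OF ok that]] .
    also have "norm (x + x') \<le> norm (x - y) + norm (x' + y)"
      using norm_triangle_ineq[of "x - y" "x' + y"] by simp
    finally show ?thesis by simp
  qed
  define K where "K = {t - norm (x - y) | x t. (x,t) \<in> G}"
  define k where "k = Sup K"
  have Kne: "K \<noteq> {}" unfolding K_def using ne by blast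
  have Kbdd: "bdd_above K" unfolding K_def bdd_above_def using key[OF _ ne] by blast
  have lo: "t - norm (x - y) \<le> k" if "(x,t) \<in> G" for x t
    unfolding k_def by (rule cSup_upper[OF _ Kbdd]) (use that K_def in blast)
  have hi: "k \<le> norm (x' + y) - t'" if "(x',t') \<in> G" for x' t'
    unfolding k_def by (rule cSup_least[OF Kne]) (use key[OF _ that] K_def in blast)
  define G' where "G' = {(x + c *\<^sub>R y, t + c * k) | x t c. (x,t) \<in> G}"
  have GG': "G \<subseteq> G'"
  proof
    fix z assume "z \<in> G"
    then obtain x t where xt: "z = (x,t)" "(x,t) \<in> G" by (cases z) auto
    then have "z = (x + 0 *\<^sub>R y, t + 0 * k)" by simp
    then show "z \<in> G'" unfolding G'_def using xt(2) by blast
  qed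
  have zero: "(0, 0) \<in> G" using hb_scale[OF ok ne, of 0] by simp
  have yG': "y \<in> fst ` G'"
  proof -
    have "(0 + 1 *\<^sub>R y, 0 + 1 * k) \<in> G'" unfolding G'_def using zero by blast
    then show ?thesis by force
  qed
  have okG': "hb_ok G'"
    unfolding hb_ok_def
  proof (intro conjI allI impI)
    fix u a w b assume "(u, a) \<in> G'" "(w, b) \<in> G'"
    then obtain x t c x' t' c' where 1: "u = x + c *\<^sub>R y" "a = t + c * k" "(x,t) \<in> G"
      and 2: "w = x' + c' *\<^sub>R y" "b = t' + c' * k" "(x',t') \<in> G"
      unfolding G'_def by blast
    have "u + w = (x + x') + (c + c') *\<^sub>R y" "a + b = (t + t') + (c + c') * k"
      using 1 2 by (simp_all add: algebra_simps scaleR_add_left)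
    moreover have "(x + x', t + t') \<in> G" using hb_add[OF ok 1(3) 2(3)] .
    ultimately show "(u + w, a + b) \<in> G'" unfolding G'_def by blast
  next
    fix u a d assume "(u, a) \<in> G'"
    then obtain x t c where 1: "u = x + c *\<^sub>R y" "a = t + c * k" "(x,t) \<in> G"
      unfolding G'_def by blast
    have "d *\<^sub>R u = d *\<^sub>R x + (d * c) *\<^sub>R y" "d * a = d * t + (d * c) * k"
      using 1 by (simp_all add: algebra_simps scaleR_add_right)
    moreover have "(d *\<^sub>R x, d * t) \<in> G" using hb_scale[OF ok 1(3)] .
    ultimately show "(d *\<^sub>R u, d * a) \<in> G'" unfolding G'_def by blast
  next
    fix u a b assume "(u, a) \<in> G'" "(u, b) \<in> G'"
    then obtain x t c x' t' c' where 1: "u = x + c *\<^sub>R y" "a = t + c * k" "(x,t) \<in> G"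
      and 2: "u = x' + c' *\<^sub>R y" "b = t' + c' * k" "(x',t') \<in> G"
      unfolding G'_def by blast
    have cc: "c = c'"
    proof (rule ccontr)
      assume ne': "c \<noteq> c'"
      have "(x' + (-1) *\<^sub>R x, t' + (-1) * t) \<in> G" using hb_add[OF ok 2(3) hb_scale[OF ok 1(3)]] .
      then have d: "(x' - x, t' - t) \<in> G" by simp
      have "((1 / (c - c')) *\<^sub>R (x' - x), (1 / (c - c')) * (t' - t)) \<in> G"
        by (rule hb_scale[OF ok d])
      moreover have "(1 / (c - c')) *\<^sub>R (x' - x) = y"
      proof -
        have "x' - x = (c - c') *\<^sub>R y" using 1(1) 2(1) by (simp add: algebra_simps scaleR_diff_left)
        then show ?thesis using ne' by simp
      qed
      ultimately have "y \<in> fst ` G" by force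
      then show False using y by blast
    qed
    then have "x = x'" using 1(1) 2(1) by simp
    then have "t = t'" using hb_fun[OF ok 1(3)] 2(3) by simp
    then show "a = b" using 1(2) 2(2) cc by simp
  next
    fix u a assume "(u, a) \<in> G'"
    then obtain x t c where 1: "u = x + c *\<^sub>R y" "a = t + c * k" "(x,t) \<in> G"
      unfolding G'_def by blast
    show "a \<le> norm u"
    proof (cases "c = 0")
      case True
      then show ?thesis using 1 hb_bound[OF ok 1(3)] by simp
    next
      case False
      show ?thesis
      proof (cases "c > 0")
        case True
        have "((1/c) *\<^sub>R x, (1/c) * t) \<in> G" using hb_scale[OF ok 1(3)] .
        from hi[OF this] have "k \<le> norm ((1/c) *\<^sub>R x + y) - (1/c) * t" .
        then have "c * k \<le> c * norm ((1/c) *\<^sub>R x + y) - t"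
          using True by (simp add: field_simps)
        then show ?thesis using 1 norm_pos_scale[OF True, of x y] by simp
      next
        case False
        define d where "d = - c"
        with \<open>c \<noteq> 0\<close> False have d: "d > 0" by simp
        have cd: "c = - d" using d_def by simp
        define N where "N = norm ((1/d) *\<^sub>R x - y)"
        have "((1/d) *\<^sub>R x, (1/d) * t) \<in> G" using hb_scale[OF ok 1(3)] .
        from lo[OF this] have m: "(1/d) * t - N \<le> k" unfolding N_def .
        have "d * ((1/d) * t - N) \<le> d * k" using mult_left_mono[OF m] d by simp
        then have m2: "t - d * N \<le> d * k" using d by (simp add: right_diff_distrib)
        have n: "norm (x + d *\<^sub>R (- y)) = d * norm ((1/d) *\<^sub>R x + - y)"
          by (rule norm_pos_scale[OF d])
        have "norm u = d * N" using n unfolding N_def 1(1) cd by simp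
        then show ?thesis using m2 1(2) cd by simp
      qed
    qed
  qed
  show ?thesis using okG' GG' yG' by blast
qed

lemma hahn_banach_norm:
  fixes v :: "'a::real_normed_vector"
  assumes v: "v \<noteq> 0"
  shows "\<exists>\<psi>. (\<forall>x y. \<psi> (x + y) = \<psi> x + \<psi> y) \<and> (\<forall>c x. \<psi> (c *\<^sub>R x) = c * \<psi> x)
             \<and> (\<forall>x. \<bar>\<psi> x\<bar> \<le> norm x) \<and> \<psi> v = norm v"
proof -
  define A where "A = {G::('a \<times> real) set. hb_ok G \<and> (v, norm v) \<in> G}"
  define G0 where "G0 = {(c *\<^sub>R v, c * norm v) | c. True}"
  have mem: "z \<in> G0 \<longleftrightarrow> (\<exists>c. z = (c *\<^sub>R v, c * norm v))" for z
    unfolding G0_def by blast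
  have okG0: "hb_ok G0"
    unfolding hb_ok_def
  proof (intro conjI allI impI)
    fix x t y s assume "(x, t) \<in> G0" "(y, s) \<in> G0"
    then obtain a b where "x = a *\<^sub>R v" "t = a * norm v" "y = b *\<^sub>R v" "s = b * norm v" by (auto simp: mem)
    then have "(x + y, t + s) = ((a + b) *\<^sub>R v, (a + b) * norm v)" by (simp add: algebra_simps scaleR_add_left)
    then show "(x + y, t + s) \<in> G0" by (auto simp: mem)
  next
    fix x t d assume "(x, t) \<in> G0"
    then obtain a where "x = a *\<^sub>R v" "t = a * norm v" by (auto simp: mem)
    then have "(d *\<^sub>R x, d * t) = ((d * a) *\<^sub>R v, (d * a) * norm v)" by simp
    then show "(d *\<^sub>R x, d * t) \<in> G0" by (auto simp: mem)
  next
    fix x t s assume h1: "(x, t) \<in> G0" and h2: "(x, s) \<in> G0"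
    obtain a where a: "x = a *\<^sub>R v" "t = a * norm v" using h1 mem by blast
    obtain b where b: "x = b *\<^sub>R v" "s = b * norm v" using h2 mem by blast
    note ab = a b
    have "a = b" using a(1) b(1) v scaleR_cancel_right by metis
    then show "t = s" using ab by simp
  next
    fix x t assume "(x, t) \<in> G0"
    then obtain a where "x = a *\<^sub>R v" "t = a * norm v" by (auto simp: mem)
    then show "t \<le> norm x" by (simp add: mult_right_mono)
  qed
  have "(v, norm v) \<in> G0" unfolding mem by (rule exI[of _ 1]) simp
  then have G0A: "G0 \<in> A" using okG0 A_def by blast
  have "\<exists>M\<in>A. \<forall>X\<in>A. M \<subseteq> X \<longrightarrow> X = M"
  proof (rule subset_Zorn)
    fix C assume ch: "subset.chain A C"
    show "\<exists>U\<in>A. \<forall>X\<in>C. X \<subseteq> U"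
    proof (cases "C = {}")
      case True
      then show ?thesis using G0A by blast
    next
      case False
      have CA: "C \<subseteq> A" and cmp: "\<And>X Y. X \<in> C \<Longrightarrow> Y \<in> C \<Longrightarrow> X \<subseteq> Y \<or> Y \<subseteq> X"
        using ch by (auto simp: subset_chain_def)
      have okC: "\<And>X. X \<in> C \<Longrightarrow> hb_ok X" using CA A_def by blast
      have "\<Union>C \<in> A"
        unfolding A_def hb_ok_def
      proof (intro CollectI conjI allI impI)
        fix x t y s assume "(x, t) \<in> \<Union>C" "(y, s) \<in> \<Union>C"
        then obtain X Y where XY: "X \<in> C" "Y \<in> C" "(x,t) \<in> X" "(y,s) \<in> Y" by blast
        show "(x + y, t + s) \<in> \<Union>C"
        proof (cases "X \<subseteq> Y")
          case True
          then show ?thesis using hb_add[OF okC[OF XY(2)], of x t y s] XY by blast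
        next
          case False
          then have "Y \<subseteq> X" using cmp[OF XY(1,2)] by blast
          then show ?thesis using hb_add[OF okC[OF XY(1)], of x t y s] XY by blast
        qed
      next
        fix x t c assume "(x, t) \<in> \<Union>C"
        then obtain X where "X \<in> C" "(x,t) \<in> X" by blast
        then show "(c *\<^sub>R x, c * t) \<in> \<Union>C" using hb_scale[OF okC] by blast
      next
        fix x t s assume "(x, t) \<in> \<Union>C" "(x, s) \<in> \<Union>C"
        then obtain X Y where XY: "X \<in> C" "Y \<in> C" "(x,t) \<in> X" "(x,s) \<in> Y" by blast
        show "t = s"
        proof (cases "X \<subseteq> Y")
          case True
          then show ?thesis using hb_fun[OF okC[OF XY(2)], of x t s] XY by blast
        next
          case False
          then have "Y \<subseteq> X" using cmp[OF XY(1,2)] by blast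
          then show ?thesis using hb_fun[OF okC[OF XY(1)], of x t s] XY by blast
        qed
      next
        fix x t assume "(x, t) \<in> \<Union>C"
        then obtain X where "X \<in> C" "(x,t) \<in> X" by blast
        then show "t \<le> norm x" using hb_bound[OF okC] by blast
      next
        obtain X where "X \<in> C" using False by blast
        then show "(v, norm v) \<in> \<Union>C" using CA A_def by blast
      qed
      then show ?thesis by blast
    qed
  qed
  then obtain M where MA: "M \<in> A" and Mmax: "\<And>X. X \<in> A \<Longrightarrow> M \<subseteq> X \<Longrightarrow> X = M" by blast
  have okM: "hb_ok M" and vM: "(v, norm v) \<in> M" using MA A_def by auto
  have dom: "x \<in> fst ` M" for x
  proof (rule ccontr)
    assume nx: "x \<notin> fst ` M"
    obtain G' where G': "hb_ok G'" "M \<subseteq> G'" "x \<in> fst ` G'" using hb_extend[OF okM vM nx] by blast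
    have "(v, norm v) \<in> G'" using G'(2) vM by blast
    then have "G' \<in> A" using G'(1) A_def by blast
    then have "G' = M" using Mmax G'(2) by blast
    then show False using nx G'(3) by blast
  qed
  define \<psi> where "\<psi> x = (THE t. (x,t) \<in> M)" for x
  have psiM: "(x, \<psi> x) \<in> M" for x
  proof -
    obtain t where t: "(x,t) \<in> M" using dom[of x] by force
    have "(THE t. (x,t) \<in> M) = t"
      by (rule the_equality[where P="\<lambda>s. (x,s) \<in> M", OF t]) (use hb_fun[OF okM t] in blast)
    then show ?thesis using t \<psi>_def by simp
  qed
  have psi_eq: "(x,t) \<in> M \<Longrightarrow> \<psi> x = t" for x t using hb_fun[OF okM psiM] by blast
  have add: "\<psi> (x + y) = \<psi> x + \<psi> y" for x y
    by (rule psi_eq[OF hb_add[OF okM psiM psiM]])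
  have sc: "\<psi> (c *\<^sub>R x) = c * \<psi> x" for c x
    by (rule psi_eq[OF hb_scale[OF okM psiM]])
  have bd: "\<bar>\<psi> x\<bar> \<le> norm x" for x
  proof -
    have "\<psi> x \<le> norm x" using hb_bound[OF okM psiM] .
    moreover have "\<psi> ((-1) *\<^sub>R x) \<le> norm ((-1) *\<^sub>R x)" using hb_bound[OF okM psiM] .
    then have "- \<psi> x \<le> norm x" using sc[of "-1" x] by simp
    ultimately show ?thesis by simp
  qed
  have "\<psi> v = norm v" by (rule psi_eq[OF vM])
  then show ?thesis using add sc bd by blast
qed


lemma complex_functional:
  fixes v :: "'a::cbanach_algebra_1"
  assumes "v \<noteq> 0"
  obtains \<phi> :: "'a \<Rightarrow> complex" where "bounded_linear \<phi>" "\<And>c x. \<phi> (scaleC c x) = c * \<phi> x" "\<phi> v \<noteq> 0"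
proof -
  obtain \<psi> where \<psi>: "\<forall>x y. \<psi> (x + y) = \<psi> x + \<psi> y" "\<forall>c x. \<psi> (c *\<^sub>R x) = c * \<psi> x"
      "\<forall>x. \<bar>\<psi> x\<bar> \<le> norm x" "\<psi> v = norm v"
    using hahn_banach_norm[OF assms] by blast
  define \<phi> where "\<phi> x = Complex (\<psi> x) (- \<psi> (scaleC \<i> x))" for x
  have add: "\<phi> (x + y) = \<phi> x + \<phi> y" for x y
    unfolding \<phi>_def using \<psi>(1) by (simp add: scaleC_add_right complex_eq_iff)
  have psc: "\<psi> (scaleC c x) = Re c * \<psi> x + Im c * \<psi> (scaleC \<i> x)" for c x
  proof -
    have "\<psi> (scaleC c x) = \<psi> (Re c *\<^sub>R x + Im c *\<^sub>R scaleC \<i> x)"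
      by (simp only: scaleC_decomp[of c x])
    then show ?thesis using \<psi>(1,2) by simp
  qed
  have sc: "\<phi> (scaleC c x) = c * \<phi> x" for c x
  proof -
    have 1: "\<psi> (scaleC \<i> (scaleC c x)) = - Im c * \<psi> x + Re c * \<psi> (scaleC \<i> x)"
      using psc[of "\<i> * c" x] by (simp add: scaleC_scaleC)
    show ?thesis unfolding \<phi>_def using psc[of c x] 1 by (simp add: complex_eq_iff algebra_simps)
  qed
  have bl: "bounded_linear \<phi>"
  proof (rule bounded_linear_intro[where K=2])
    show "\<phi> (x + y) = \<phi> x + \<phi> y" for x y by (rule add)
    show "\<phi> (r *\<^sub>R x) = r *\<^sub>R \<phi> x" for r x
      using sc[of "complex_of_real r" x] by (simp add: scaleC_of_real scaleR_conv_of_real)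
    show "norm (\<phi> x) \<le> norm x * 2" for x
    proof -
      have "norm (\<phi> x) \<le> \<bar>Re (\<phi> x)\<bar> + \<bar>Im (\<phi> x)\<bar>" by (rule cmod_le)
      also have "\<dots> = \<bar>\<psi> x\<bar> + \<bar>\<psi> (scaleC \<i> x)\<bar>" unfolding \<phi>_def by simp
      also have "\<dots> \<le> norm x + norm (scaleC \<i> x)" using \<psi>(3) by (simp add: add_mono)
      also have "norm (scaleC \<i> x) = norm x" by (simp add: norm_scaleC)
      finally show ?thesis by simp
    qed
  qed
  have "Re (\<phi> v) \<noteq> 0" unfolding \<phi>_def using \<psi>(4) assms by simp
  then have "\<phi> v \<noteq> 0" by auto
  then show ?thesis using that bl sc by blast
qed

lemma idem_left: "p * p = p \<Longrightarrow> p * z * p = z \<Longrightarrow> p * z = (z::'a::ring)"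
  by (metis mult.assoc)
lemma idem_right: "p * p = p \<Longrightarrow> p * z * p = z \<Longrightarrow> z * p = (z::'a::ring)"
  by (metis mult.assoc)

lemma corner_inverse:
  fixes p :: "'a::cbanach_algebra_1"
  assumes pp: "p * p = p" and p0: "p \<noteq> 0"
    and div: "\<And>z. p * z * p = z \<Longrightarrow> z \<noteq> 0 \<Longrightarrow> \<exists>w. p * w * p = w \<and> w * z = p"
    and z: "p * z * p = z" "z \<noteq> 0"
  shows "\<exists>w. p * w * p = w \<and> w * z = p \<and> z * w = p"
proof -
  obtain w where w: "p * w * p = w" "w * z = p" using div z by blast
  have "w \<noteq> 0" using w(2) p0 by auto
  then obtain u where u: "p * u * p = u" "u * w = p" using div w(1) by blast
  have pz: "p * z = z" by (rule idem_left[OF pp z(1)])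
  have up: "u * p = u" by (rule idem_right[OF pp u(1)])
  have "u = u * (w * z)" using up w(2) by simp
  also have "\<dots> = (u * w) * z" by (simp add: mult.assoc)
  also have "\<dots> = z" using u(2) pz by simp
  finally have "z * w = p" using u(2) by simp
  then show ?thesis using w by blast
qed

lemma corner_GM:
  fixes p :: "'a::cbanach_algebra_1"
  assumes pp: "p * p = p" and p0: "p \<noteq> 0"
    and div: "\<And>z. p * z * p = z \<Longrightarrow> z \<noteq> 0 \<Longrightarrow> \<exists>w. p * w * p = w \<and> w * z = p"
    and z: "p * z * p = z"
  shows "\<exists>c. z = scaleC c p"
proof (rule ccontr)
  assume nc: "\<nexists>c. z = scaleC c p"
  define zl where "zl l = z - scaleC l p" for l
  have zl_corner: "p * zl l * p = zl l" for l
  proof -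
    have "p * zl l * p = p * z * p - scaleC l (p * p * p)"
      unfolding zl_def by (simp add: right_diff_distrib left_diff_distrib mult_scaleC_left mult_scaleC_right)
    then show ?thesis using pp z unfolding zl_def by simp
  qed
  have zl_nz: "zl l \<noteq> 0" for l using nc unfolding zl_def by auto
  have ex: "\<exists>w. p * w * p = w \<and> w * zl l = p \<and> zl l * w = p" for l
    by (rule corner_inverse[OF pp p0 div zl_corner zl_nz])
  define R where "R l = (SOME w. p * w * p = w \<and> w * zl l = p \<and> zl l * w = p)" for l
  have R: "p * R l * p = R l" "R l * zl l = p" "zl l * R l = p" for l
    using someI_ex[OF ex[of l]] unfolding R_def by blast+
  have Rp: "R l * p = R l" "p * R l = R l" for l
    using idem_right[OF pp R(1)] idem_left[OF pp R(1)] by auto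
  have res: "R l - R m = scaleC (l - m) (R l * R m)" for l m
  proof -
    have "R l - R m = R l * (zl m * R m) - (R l * zl l) * R m" using R(2,3) Rp by simp
    also have "\<dots> = R l * ((zl m - zl l) * R m)"
      by (simp add: mult.assoc left_diff_distrib right_diff_distrib)
    also have "zl m - zl l = scaleC (l - m) p" unfolding zl_def by (simp add: scaleC_diff_left)
    also have "R l * (scaleC (l - m) p * R m) = scaleC (l - m) (R l * R m)"
      by (simp add: mult_scaleC_left mult_scaleC_right Rp)
    finally show ?thesis .
  qed
  have bnd: "norm (R l) \<le> norm (R m) + cmod (l - m) * (norm (R l) * norm (R m))" for l m
  proof -
    have "R l = R m + scaleC (l - m) (R l * R m)" by (simp add: res[of l m, symmetric])
    then have "norm (R l) \<le> norm (R m) + norm (scaleC (l - m) (R l * R m))"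
      by (metis norm_triangle_ineq)
    also have "norm (scaleC (l - m) (R l * R m)) = cmod (l - m) * norm (R l * R m)" by (rule norm_scaleC)
    also have "\<dots> \<le> cmod (l - m) * (norm (R l) * norm (R m))"
      by (rule mult_left_mono[OF norm_mult_ineq norm_ge_zero])
    finally show ?thesis by simp
  qed
  have near: "norm (R l) \<le> 2 * norm (R m)" if h: "cmod (l - m) * norm (R m) \<le> 1/2" for l m
  proof -
    have "cmod (l - m) * (norm (R l) * norm (R m)) = norm (R l) * (cmod (l - m) * norm (R m))"
      by (simp add: mult_ac)
    also have "\<dots> \<le> norm (R l) * (1/2)" by (rule mult_left_mono[OF h norm_ge_zero])
    finally show ?thesis using bnd[of l m] by simp
  qed
  have dif: "norm (R l - R m) \<le> cmod (l - m) * (2 * norm (R m) * norm (R m))"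
    if h: "cmod (l - m) * norm (R m) \<le> 1/2" for l m
  proof -
    have "norm (R l - R m) = cmod (l - m) * norm (R l * R m)" by (simp add: res norm_scaleC)
    also have "\<dots> \<le> cmod (l - m) * (norm (R l) * norm (R m))"
      by (rule mult_left_mono[OF norm_mult_ineq norm_ge_zero])
    also have "\<dots> \<le> cmod (l - m) * (2 * norm (R m) * norm (R m))"
      by (rule mult_left_mono[OF mult_right_mono[OF near[OF h] norm_ge_zero] norm_ge_zero])
    finally show ?thesis .
  qed
  have cont: "(R \<longlongrightarrow> R m) (at m)" for m
  proof -
    have t0: "((\<lambda>l. l - m) \<longlongrightarrow> 0) (at m)"
      using LIM_zero_iff[of "\<lambda>l. l" m "at m"] by simp
    define d where "d = 1 / (2 * (norm (R m) + 1))"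
    have np: "norm (R m) + 1 > 0" by (smt (verit) norm_ge_zero)
    then have dpos: "d > 0" unfolding d_def by simp
    have dle: "d * norm (R m) \<le> 1/2" unfolding d_def using np by (simp add: field_simps)
    have ev: "eventually (\<lambda>l. norm (R l - R m) \<le> norm (l - m) * (2 * norm (R m) * norm (R m))) (at m)"
      unfolding eventually_at
    proof (rule exI[of _ d], intro conjI ballI impI)
      show "d > 0" by (rule dpos)
      fix l assume "l \<in> UNIV" "l \<noteq> m \<and> dist l m < d"
      then have "cmod (l - m) \<le> d" by (simp add: dist_norm)
      then have "cmod (l - m) * norm (R m) \<le> d * norm (R m)" by (rule mult_right_mono) simp
      then have "cmod (l - m) * norm (R m) \<le> 1/2" using dle by linarith
      then show "norm (R l - R m) \<le> norm (l - m) * (2 * norm (R m) * norm (R m))" by (rule dif)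
    qed
    have "((\<lambda>l. R l - R m) \<longlongrightarrow> 0) (at m)" by (rule tendsto_0_le[OF t0 ev])
    then show ?thesis by (simp add: LIM_zero_iff)
  qed
  have R0: "R 0 \<noteq> 0" using R(2)[of 0] p0 by auto
  obtain \<phi> :: "'a \<Rightarrow> complex" where bl: "bounded_linear \<phi>" and sc: "\<And>c x. \<phi> (scaleC c x) = c * \<phi> x"
    and nz: "\<phi> (R 0) \<noteq> 0"
    by (rule complex_functional[OF R0]) blast
  define f where "f l = \<phi> (R l)" for l
  have deriv: "(f has_field_derivative \<phi> (R m * R m)) (at m)" for m
  proof -
    have ev: "eventually (\<lambda>l. \<phi> (R l * R m) = (f l - f m) / (l - m)) (at m)"
      unfolding eventually_at
    proof (rule exI[of _ 1], intro conjI ballI impI)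
      fix l assume "l \<in> UNIV" "l \<noteq> m \<and> dist l m < 1"
      then have lm: "l - m \<noteq> 0" by simp
      have "f l - f m = \<phi> (R l - R m)" unfolding f_def by (simp add: linear_diff[OF bounded_linear.linear[OF bl]])
      also have "\<dots> = (l - m) * \<phi> (R l * R m)" by (simp add: res sc)
      finally show "\<phi> (R l * R m) = (f l - f m) / (l - m)" using lm by simp
    qed simp
    have "((\<lambda>l. \<phi> (R l * R m)) \<longlongrightarrow> \<phi> (R m * R m)) (at m)"
      by (rule bounded_linear.tendsto[OF bl tendsto_mult[OF cont tendsto_const]])
    then have "((\<lambda>l. (f l - f m) / (l - m)) \<longlongrightarrow> \<phi> (R m * R m)) (at m)"
      using tendsto_cong[OF ev] by blast
    then show ?thesis by (simp add: has_field_derivative_iff)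
  qed
  have hol: "f holomorphic_on UNIV"
    using deriv by (auto simp: holomorphic_on_open)
  obtain K where K: "K > 0" "\<And>x. norm (\<phi> x) \<le> norm x * K"
    using bounded_linear.pos_bounded[OF bl] by blast
  have lim: "(f \<longlongrightarrow> 0) at_infinity"
  proof -
    have ev: "eventually (\<lambda>l. norm (f l) \<le> norm (inverse l) * (2 * norm p * K)) at_infinity"
      unfolding eventually_at_infinity
    proof (rule exI[of _ "2 * norm z + 1"], intro allI impI)
      fix l :: complex assume l: "2 * norm z + 1 \<le> norm l"
      have lpos: "cmod l > 0" using l by (smt (verit) norm_ge_zero)
      have eq: "scaleC l (R l) = R l * z - p"
      proof -
        have "p = R l * z - R l * scaleC l p" using R(2)[of l] unfolding zl_def by (simp add: right_diff_distrib)
        also have "R l * scaleC l p = scaleC l (R l)" by (simp add: mult_scaleC_right Rp)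
        finally show ?thesis by (simp add: algebra_simps)
      qed
      have "cmod l * norm (R l) = norm (R l * z - p)" using eq by (simp add: norm_scaleC[symmetric])
      also have "\<dots> \<le> norm (R l * z) + norm p" by (rule norm_triangle_ineq4)
      also have "\<dots> \<le> norm (R l) * norm z + norm p" using norm_mult_ineq by simp
      finally have a: "cmod l * norm (R l) \<le> norm (R l) * norm z + norm p" .
      have "norm (R l) * norm z \<le> norm (R l) * ((cmod l - 1) / 2)"
        by (rule mult_left_mono) (use l in simp_all)
      then have c: "cmod l * norm (R l) \<le> norm (R l) * ((cmod l - 1) / 2) + norm p" using a by linarith
      have "norm (R l) * ((cmod l - 1) / 2) = (cmod l * norm (R l)) / 2 - norm (R l) / 2"
        by (simp add: field_simps)
      then have "cmod l * norm (R l) \<le> 2 * norm p" using c norm_ge_zero[of "R l"] by linarith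
      then have b: "norm (R l) \<le> 2 * norm p / cmod l" using lpos by (simp add: pos_le_divide_eq mult.commute)
      have "norm (f l) \<le> norm (R l) * K" unfolding f_def by (rule K(2))
      also have "\<dots> \<le> (2 * norm p / cmod l) * K" by (rule mult_right_mono[OF b]) (use K in simp)
      also have "\<dots> = norm (inverse l) * (2 * norm p * K)" by (simp add: norm_inverse divide_inverse mult_ac)
      finally show "norm (f l) \<le> norm (inverse l) * (2 * norm p * K)" .
    qed
    show ?thesis by (rule tendsto_0_le[OF tendsto_inverse_0 ev])
  qed
  have "f 0 = 0" by (rule Liouville_weak_0[OF hol lim])
  then show False using nz unfolding f_def by simp
qed


lemma neumann:
  fixes y :: "'a::{banach, real_normed_algebra_1}"
  assumes "norm y < 1"
  shows "\<exists>v. v * (1 - y) = 1"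
proof -
  have sg: "summable (\<lambda>n. norm y ^ n)" using assms by (simp add: summable_geometric)
  have s: "summable (\<lambda>n. y ^ n)"
    by (rule summable_comparison_test'[OF sg, of 0]) (rule norm_power_ineq)
  define v where "v = suminf (\<lambda>n. y ^ n)"
  have 1: "(\<lambda>n. y ^ n) sums v" using s v_def summable_sums by blast
  have "(\<lambda>n. y ^ n * y) sums (v * y)" by (rule sums_mult2[OF 1])
  then have 2: "(\<lambda>n. y ^ Suc n) sums (v * y)" by (simp only: power_Suc2)
  have 3: "(\<lambda>n. y ^ n) sums (v * y + y ^ 0)" using iffD1[OF sums_Suc_iff[of "\<lambda>n. y ^ n" "v * y"] 2] .
  have "v = v * y + y ^ 0" by (rule sums_unique2[OF 1 3])
  then have "v = v * y + 1" by simp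
  then have "v - v * y = 1" by (metis add_diff_cancel_left')
  then have "v * (1 - y) = 1" by (simp add: right_diff_distrib)
  then show ?thesis by blast
qed

lemma minimal_GM:
  assumes m: "minimal_left_ideal (L::'a::cbanach_algebra_1 set)"
    and p: "p \<in> L" "p * p = p" "p \<noteq> 0" "L = range (\<lambda>x. x * p)"
    and z: "p * z * p = z"
  shows "\<exists>c. z = scaleC c p"
proof (rule corner_GM[OF p(2) p(3) _ z])
  fix z assume z: "p * z * p = z" "z \<noteq> 0"
  have zp: "z * p = z" by (rule idem_right[OF p(2) z(1)])
  have pz: "p * z = z" by (rule idem_left[OF p(2) z(1)])
  let ?J = "range (\<lambda>x. x * z)"
  have J: "left_ideal ?J" by (rule left_ideal_principal)
  have Jsub: "?J \<subseteq> L"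
  proof
    fix y assume "y \<in> ?J"
    then obtain x where "y = x * z" by blast
    then have "y = (x * z) * p" using zp by (simp add: mult.assoc)
    then show "y \<in> L" using p(4) by blast
  qed
  have "z \<in> ?J" by (metis mult_1_left rangeI)
  then have "?J \<noteq> {0}" using z(2) by blast
  then have "?J = L" using m J Jsub unfolding minimal_left_ideal_def by blast
  then obtain b where b: "p = b * z" using p(1) by blast
  define w where "w = p * b * p"
  have "p * w * p = w" unfolding w_def using p(2) by (metis mult.assoc)
  moreover have "w * z = p"
  proof -
    have "w * z = p * b * (p * z)" unfolding w_def by (simp add: mult.assoc)
    also have "\<dots> = p * (b * z)" using pz by (simp add: mult.assoc)
    also have "\<dots> = p" using b p(2) by simp
    finally show ?thesis .
  qed
  ultimately show "\<exists>w. p * w * p = w \<and> w * z = p" by blast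
qed

lemma minimal_pair:
  assumes ss: "semisimple TYPE('a::cbanach_algebra_1)"
    and m: "minimal_left_ideal (L::'a set)" "minimal_left_ideal (L'::'a set)"
    and t: "t \<in> L" "t' \<in> L'"
  shows "\<exists>y. \<forall>a. \<exists>c. t * a * t' = scaleC c y"
proof -
  obtain p where p: "p \<in> L" "p * p = p" "p \<noteq> 0" "L = range (\<lambda>x. x * p)"
    by (rule minimal_idempotent[OF ss m(1)]) blast
  obtain p' where p': "p' \<in> L'" "p' * p' = p'" "p' \<noteq> 0" "L' = range (\<lambda>x. x * p')"
    by (rule minimal_idempotent[OF ss m(2)]) blast
  have tp: "t * p = t"
  proof -
    obtain b where "t = b * p" using t(1) p(4) by blast
    then show ?thesis using p(2) by (simp add: mult.assoc)
  qed
  have tp': "t' * p' = t'"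
  proof -
    obtain b where "t' = b * p'" using t(2) p'(4) by blast
    then show ?thesis using p'(2) by (simp add: mult.assoc)
  qed
  have tpX: "t * (p * X) = t * X" for X using tp by (simp add: mult.assoc[symmetric])
  have decomp: "t * a * t' = t * (p * (a * t') * p')" for a
    by (simp add: mult.assoc tpX tp')
  show ?thesis
  proof (cases "\<forall>a. p * a * p' = 0")
    case True
    have "t * a * t' = scaleC 0 0" for a using decomp[of a] True by simp
    then show ?thesis by blast
  next
    case False
    then obtain a0 where a0: "p * a0 * p' \<noteq> 0" by blast
    define y0 where "y0 = p * a0 * p'"
    have y0p: "y0 * p' = y0" unfolding y0_def using p'(2) by (simp add: mult.assoc)
    have py0: "p * y0 = y0" unfolding y0_def using p(2) by (simp add: mult.assoc[symmetric])
    let ?J = "range (\<lambda>x. x * y0)"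
    have J: "left_ideal ?J" by (rule left_ideal_principal)
    have Jsub: "?J \<subseteq> L'"
    proof
      fix y assume "y \<in> ?J"
      then obtain x where "y = x * y0" by blast
      then have "y = (x * y0) * p'" using y0p by (simp add: mult.assoc)
      then show "y \<in> L'" using p'(4) by blast
    qed
    have "y0 \<in> ?J" by (metis mult_1_left rangeI)
    then have "?J \<noteq> {0}" using a0 y0_def by blast
    then have "?J = L'" using m(2) J Jsub unfolding minimal_left_ideal_def by blast
    then obtain c0 where c0: "p' = c0 * y0" using p'(1) by blast
    have one: "\<exists>c. z = scaleC c y0" if z: "p * z * p' = z" for z
    proof -
      have pz: "p * z = z" using z p(2) by (metis mult.assoc)
      have zp: "z * p' = z" using z p'(2) by (metis mult.assoc)
      have pzX: "p * (z * X) = z * X" for X using pz by (simp add: mult.assoc[symmetric])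
      have "z = z * p'" using zp by simp
      also have "\<dots> = z * c0 * (p * y0)" using c0 py0 by (simp add: mult.assoc)
      also have "\<dots> = (p * (z * c0) * p) * y0" by (simp add: mult.assoc pzX)
      finally have zz: "z = (p * (z * c0) * p) * y0" .
      have "p * (p * (z * c0) * p) * p = p * (z * c0) * p" using p(2) by (metis mult.assoc)
      then obtain c where "p * (z * c0) * p = scaleC c p" using minimal_GM[OF m(1) p] by blast
      then have "z = scaleC c p * y0" using zz by simp
      then have "z = scaleC c y0" using py0 by (simp add: mult_scaleC_left)
      then show ?thesis by blast
    qed
    have "\<exists>c. t * a * t' = scaleC c (t * y0)" for a
    proof -
      have "p * (p * (a * t') * p') * p' = p * (a * t') * p'" using p(2) p'(2)
        by (metis mult.assoc)
      then obtain c where "p * (a * t') * p' = scaleC c y0" using one by blast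
      then have "t * a * t' = t * scaleC c y0" using decomp[of a] by simp
      then have "t * a * t' = scaleC c (t * y0)" by (simp add: mult_scaleC_right)
      then show ?thesis by blast
    qed
    then show ?thesis by blast
  qed
qed

lemma sum_mult_expand: "(\<Sum>t\<in>T. scaleC (c t) t) * y = (\<Sum>t\<in>T. scaleC (c t) (t * (y::'a::cbanach_algebra_1)))"
  by (simp add: sum_distrib_right mult_scaleC_left)
lemma mult_sum_expand: "y * (\<Sum>t\<in>T. scaleC (c t) t) = (\<Sum>t\<in>T. scaleC (c t) ((y::'a::cbanach_algebra_1) * t))"
  by (simp add: sum_distrib_left mult_scaleC_right)

lemma backward:
  assumes ss: "semisimple TYPE('a::cbanach_algebra_1)"
    and hi: "has_identity (closure (socle::'a set))"
  shows "cfinite_dim (socle::'a set)"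
proof -
  let ?S = "socle::'a set"
  obtain e where e: "e \<in> closure ?S" "\<And>x. x \<in> closure ?S \<Longrightarrow> e * x = x \<and> x * e = x"
    using hi unfolding has_identity_def by blast
  have ee: "e * e = e" using e(2)[OF e(1)] by simp
  have "\<forall>\<epsilon>>0. \<exists>y\<in>?S. dist y e < \<epsilon>" using e(1) by (simp only: closure_approachable)
  then have "\<exists>y\<in>?S. dist y e < 1" by simp
  then obtain s where s: "s \<in> ?S" "dist s e < 1" by blast
  have "norm (e - s) < 1" using s(2) by (simp add: dist_norm norm_minus_commute)
  then obtain v where v: "v * (1 - (e - s)) = 1" using neumann by blast
  have se: "s * e = s" using e(2)[OF subsetD[OF closure_subset s(1)]] by simp
  have ue: "(1 - (e - s)) * e = s" using ee se by (simp add: left_diff_distrib)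
  have "e = (v * (1 - (e - s))) * e" using v by simp
  also have "\<dots> = v * s" using ue by (simp add: mult.assoc)
  finally have eS: "e \<in> ?S" using socle_left[OF s(1)] by simp
  have unit: "e * x = x" "x * e = x" if "x \<in> ?S" for x using e(2)[OF subsetD[OF closure_subset that]] by simp_all
  obtain T c where T: "finite T" "T \<subseteq> \<Union>{L. minimal_left_ideal L}" "e = (\<Sum>t\<in>T. scaleC (c t) t)"
    using eS unfolding socle_def cspan_def by blast
  have exY: "\<exists>y. \<forall>a. \<exists>c. t * a * t' = scaleC c y" if tT: "t \<in> T" and tT': "t' \<in> T" for t t'
  proof -
    obtain L L' where "minimal_left_ideal L" "t \<in> L" "minimal_left_ideal L'" "t' \<in> L'"
      using tT tT' T(2) by blast
    then show ?thesis using minimal_pair[OF ss] by blast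
  qed
  define Y :: "'a \<Rightarrow> 'a \<Rightarrow> 'a" where "Y t t' = (SOME y. \<forall>a. \<exists>c. t * a * t' = scaleC c y)" for t t'
  have Y: "\<exists>c. t * a * t' = scaleC c (Y t t')" if "t \<in> T" "t' \<in> T" for t t' a
    using someI_ex[OF exY[OF that]] unfolding Y_def by blast
  define B where "B = (\<lambda>(t,t'). Y t t') ` (T \<times> T)"
  have fB: "finite B" unfolding B_def using T(1) by simp
  have cs: "csubspace (cspan B)" by (rule csubspace_cspan)
  have eL: "e * y = (\<Sum>t\<in>T. scaleC (c t) (t * y))" for y
    unfolding T(3) by (rule sum_mult_expand)
  have eR: "y * e = (\<Sum>t\<in>T. scaleC (c t) (y * t))" for y
    unfolding T(3) by (rule mult_sum_expand)
  have "?S \<subseteq> cspan B"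
  proof
    fix x assume x: "x \<in> ?S"
    have "x = (e * x) * e" using unit[OF x] by simp
    also have "\<dots> = (\<Sum>t'\<in>T. scaleC (c t') ((e * x) * t'))" by (rule eR)
    also have "\<dots> \<in> cspan B"
    proof (rule csubspace_sum[OF cs], rule csubspace_scaleC[OF cs])
      fix t' assume t': "t' \<in> T"
      have "(e * x) * t' = e * (x * t')" by (simp add: mult.assoc)
      also have "\<dots> = (\<Sum>t\<in>T. scaleC (c t) (t * (x * t')))" by (rule eL)
      also have "\<dots> \<in> cspan B"
      proof (rule csubspace_sum[OF cs], rule csubspace_scaleC[OF cs])
        fix t assume t: "t \<in> T"
        obtain d where d: "t * x * t' = scaleC d (Y t t')" using Y[OF t t'] by blast
        have "Y t t' \<in> B" unfolding B_def using t t' by force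
        then have "scaleC d (Y t t') \<in> cspan B" by (rule csubspace_scaleC[OF cs cspan_superset])
        then show "t * (x * t') \<in> cspan B" using d by (simp add: mult.assoc)
      qed
      finally show "(e * x) * t' \<in> cspan B" .
    qed
    finally show "x \<in> cspan B" .
  qed
  then show ?thesis unfolding cfinite_dim_def using fB by blast
qed

theorem proposition1p8:
  assumes "semisimple TYPE('a::cbanach_algebra_1)"
  shows "cfinite_dim (socle :: 'a set) \<longleftrightarrow> has_identity (closure (socle :: 'a set))"
  using forward[OF assms] backward[OF assms] by blast

end
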